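(* If $(M,+,0)$ is a naturally ordered commutative compact Hausdorff topological monoid, then the partially ordered set $(M,\le)$ is bounded, i.e., it has a greatest element.
   Context: A topological monoid is a monoid with a topology making the operation continuous. For a commutative monoid $(M,+,0)$, define $x\le y$ iff there is $z\in M$ with $x+z=y$; this is a preorder, and $M$ is naturally ordered if it is antisymmetric (so $(M,\le)$ is a partial order with least element $0$). *)

theory Defs
  imports "HOL-Analysis.Analysis"
begin

definition alg_le :: "'a::comm_monoid_add \<Rightarrow> 'a \<Rightarrow> bool" where
  "alg_le x y \<longleftrightarrow> (\<exists>z. x + z = y)"

definition naturally_ordered :: "'a::comm_monoid_add itself \<Rightarrow> bool" where
  "naturally_ordered _ \<longleftrightarrow> (\<forall>x y::'a. alg_le x y \<and> alg_le y x \<longrightarrow> x = y)"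

end

theory Submission
  imports Defs
begin

theorem proposition3p4:
  assumes "naturally_ordered TYPE('a::{topological_comm_monoid_add, t2_space})"
    and "compact (UNIV :: 'a set)"
  shows "\<exists>m::'a. \<forall>x. alg_le x m"
proof -
  have cl: "closed (range ((+) x))" for x :: 'a
  proof -
    have c: "continuous_on UNIV ((+) x)"
      by (intro continuous_intros)
    have "compact (range ((+) x))"
      using compact_continuous_image[OF c assms(2)] by assumption
    then show ?thesis by (rule compact_imp_closed)
  qed
  have fin: "(UNIV::'a set) \<inter> (\<Inter>x\<in>X. range ((+) x)) \<noteq> {}" if "finite X" for X :: "'a set"
  proof -
    have "sum id X \<in> range ((+) x)" if "x \<in> X" for x
    proof -
      have "sum id X = x + sum id (X - {x})"
        using sum.remove[OF \<open>finite X\<close> \<open>x \<in> X\<close>, of id] by (simp only: id_apply)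
      then show ?thesis by (rule range_eqI)
    qed
    then have "sum id X \<in> (UNIV::'a set) \<inter> (\<Inter>x\<in>X. range ((+) x))" by simp
    then show ?thesis by blast
  qed
  have "(UNIV::'a set) \<inter> (\<Inter>x\<in>UNIV. range ((+) x)) \<noteq> {}"
    by (rule compact_imp_fip_image[OF assms(2)]) (rule cl, rule fin)
  then obtain m :: 'a where m: "m \<in> (\<Inter>x\<in>UNIV. range ((+) x))" by auto
  have "alg_le x m" for x
  proof -
    have "m \<in> range ((+) x)" using m by simp
    then obtain z where "m = x + z" by auto
    then show ?thesis unfolding alg_le_def by auto
  qed
  then show ?thesis by auto
qed

end
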